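(* Let $m\in(0,2]$, $\lambda\ge0$ and $q\ge1$. Let $f(x)=\sum_{k=0}^{\infty}x^ka_k$, $a_k\in\mathbb{O}$, be a slice regular function on $\mathbb{B}$ with $|f(x)|\le1$ for all $x\in\mathbb{B}$. Then $$\mathcal{B}_f(x):=|a_0|^m+\sum_{k=1}^{\infty}|x^ka_k|+\lambda|f(x)-a_0|^q\le 1\quad\text{for all } x\in\mathbb{B}\text{ with } |x|\le R_{m,\lambda,q},$$ where $R_{m,\lambda,q}$ is the unique root in $(0,1)$ of the equation $$-\frac{m}{2}+\frac{r}{1-r}+\lambda\left(\frac{r}{1-r}\right)^q=0.$$ In particular, $$\sum_{k=0}^{\infty}|x^ka_k|+|f(x)-a_0|^2\le1\quad\text{for } |x|\le 2-\sqrt{3}.$$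
   Context: $\mathbb{O}$ denotes the real algebra of octonions (the 8-dimensional non-commutative, non-associative but alternative normed division algebra over $\mathbb{R}$), with modulus $|x|=\sqrt{x\overline{x}}$ equal to the Euclidean norm on $\mathbb{R}^8$; the modulus is multiplicative, $|xy|=|x||y|$. $\mathbb{B}=\{x\in\mathbb{O}:|x|<1\}$ is the open unit ball. A slice regular function on $\mathbb{B}$ is (equivalently) a function of the form $f(x)=\sum_{k=0}^{\infty}x^ka_k$ with coefficients $a_k\in\mathbb{O}$ placed on the right, the series converging for every $x\in\mathbb{B}$ (the powers $x^k$ are unambiguous since $\mathbb{O}$ is alternative). *)

theory Defs
  imports "HOL-Analysis.Analysis"
begin

text \<open>Quaternions as pairs of complex numbers and octonions as pairs of quaternions,
  via the Cayley-Dickson construction  (a,b)(c,d) = (ac - d^* b, d a + b c^*).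
  Addition, the real vector space structure, the topology and the norm are those
  of the product type; the norm is the Euclidean norm on R^8.\<close>

type_synonym quat = "complex \<times> complex"
type_synonym oct = "quat \<times> quat"

definition qconj :: "quat \<Rightarrow> quat" where
  "qconj p = (cnj (fst p), - snd p)"

definition qmul :: "quat \<Rightarrow> quat \<Rightarrow> quat" where
  "qmul p r = (fst p * fst r - cnj (snd r) * snd p, snd r * fst p + snd p * cnj (fst r))"

definition omul :: "oct \<Rightarrow> oct \<Rightarrow> oct" where
  "omul x y = (qmul (fst x) (fst y) - qmul (qconj (snd y)) (snd x),
               qmul (snd y) (fst x) + qmul (snd x) (qconj (fst y)))"

definition oone :: oct where
  "oone = ((1, 0), (0, 0))"

primrec opow :: "oct \<Rightarrow> nat \<Rightarrow> oct" where
  "opow x 0 = oone"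
| "opow x (Suc k) = omul x (opow x k)"

end

theory Submission
  imports Defs "HOL-Complex_Analysis.Riemann_Mapping"
begin

definition oc :: "real \<Rightarrow> real \<Rightarrow> real \<Rightarrow> real \<Rightarrow> real \<Rightarrow> real \<Rightarrow> real \<Rightarrow> real \<Rightarrow> oct" where
  "oc a b c d e f g h = ((Complex a b, Complex c d), (Complex e f, Complex g h))"

lemma oct_ex: "\<exists>a b c d e f g h. x = oc a b c d e f g h"
  unfolding oc_def
  by (metis complex.exhaust_sel prod.collapse)

lemma norm_sq_oc: "(norm (oc a b c d e f g h))\<^sup>2 = a\<^sup>2+b\<^sup>2+c\<^sup>2+d\<^sup>2+e\<^sup>2+f\<^sup>2+g\<^sup>2+h\<^sup>2"
  unfolding oc_def power2_norm_eq_inner by (simp add: inner_complex_def power2_eq_square)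

lemma inner_oc: "inner (oc a b c d e f g h) (oc a' b' c' d' e' f' g' h') = a*a'+b*b'+c*c'+d*d'+e*e'+f*f'+g*g'+h*h'"
  unfolding oc_def by (simp add: inner_complex_def)

lemma omul_oc: "omul (oc a b c d e f g h) (oc a' b' c' d' e' f' g' h') = oc
    (a * a' - b * b' - (c' * c + d' * d) - (e' * e + f' * f + (g * g' + h * h')))
    (a * b' + b * a' - (c' * d - d' * c) - (e' * f - f' * e + (g * h' - h * g')))
    (c' * a - d' * b + (c * a' + d * b') - (g * e' + h * f' - (g' * e + h' * f)))
    (c' * b + d' * a + (d * a' - c * b') - (h * e' - g * f' - (h' * e - g' * f)))
    (e' * a - f' * b - (c * g' + d * h') + (e * a' + f * b' + (c' * g + d' * h)))
    (e' * b + f' * a - (c * h' - d * g') + (f * a' - e * b' + (c' * h - d' * g)))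
    (c * e' - d * f' + (g' * a + h' * b) + (g * a' - h * b' - (c' * e - d' * f)))
    (c * f' + d * e' + (h' * a - g' * b) + (g * b' + h * a' - (c' * f + d' * e)))"
  unfolding oc_def omul_def qmul_def qconj_def 
  by (simp add: complex_eq_iff)

lemma oc_add: "oc a b c d e f g h + oc a' b' c' d' e' f' g' h' = oc (a+a') (b+b') (c+c') (d+d') (e+e') (f+f') (g+g') (h+h')"
  unfolding oc_def by (simp add: complex_eq_iff)
lemma oc_diff: "oc a b c d e f g h - oc a' b' c' d' e' f' g' h' = oc (a-a') (b-b') (c-c') (d-d') (e-e') (f-f') (g-g') (h-h')"
  unfolding oc_def by (simp add: complex_eq_iff)
lemma oc_scaleR: "r *\<^sub>R oc a b c d e f g h = oc (r*a) (r*b) (r*c) (r*d) (r*e) (r*f) (r*g) (r*h)"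
  unfolding oc_def by (simp add: complex_eq_iff)
lemma oc_eq: "oc a b c d e f g h = oc a' b' c' d' e' f' g' h' \<longleftrightarrow> a=a' \<and> b=b' \<and> c=c' \<and> d=d' \<and> e=e' \<and> f=f' \<and> g=g' \<and> h=h'"
  unfolding oc_def by (simp add: complex_eq_iff)
lemma oone_oc: "oone = oc 1 0 0 0 0 0 0 0"
  unfolding oc_def oone_def by (simp add: complex_eq_iff)
lemma zero_oc: "0 = oc 0 0 0 0 0 0 0 0"
  unfolding oc_def by (simp add: zero_prod_def complex_eq_iff)

lemma norm_omul_sq: "(norm (omul x y))\<^sup>2 = (norm x)\<^sup>2 * (norm y)\<^sup>2"
proof -
  obtain a b c d e f g h where x: "x = oc a b c d e f g h" using oct_ex by blast
  obtain a' b' c' d' e' f' g' h' where y: "y = oc a' b' c' d' e' f' g' h'" using oct_ex by blast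
  show ?thesis unfolding x y omul_oc norm_sq_oc
    by (simp add: power2_eq_square algebra_simps)
qed

lemma norm_omul: "norm (omul x y) = norm x * norm y"
  by (metis norm_omul_sq norm_ge_zero power_mult_distrib zero_le_mult_iff power2_eq_imp_eq)

definition oconj :: "oct \<Rightarrow> oct" where "oconj x = (qconj (fst x), - snd x)"
lemma oconj_oc: "oconj (oc a b c d e f g h) = oc a (-b) (-c) (-d) (-e) (-f) (-g) (-h)"
  unfolding oc_def oconj_def qconj_def by (simp add: complex_eq_iff)

lemma omul_oone_left: "omul oone y = y"
proof -
  obtain a' b' c' d' e' f' g' h' where y: "y = oc a' b' c' d' e' f' g' h'" using oct_ex by blast
  show ?thesis unfolding y oone_oc omul_oc oc_eq by simp
qed
lemma omul_zero_left: "omul 0 y = 0"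
proof -
  obtain a' b' c' d' e' f' g' h' where y: "y = oc a' b' c' d' e' f' g' h'" using oct_ex by blast
  show ?thesis unfolding y zero_oc omul_oc oc_eq by simp
qed
lemma omul_add_left: "omul (x + z) y = omul x y + omul z y"
proof -
  obtain a b c d e f g h where x: "x = oc a b c d e f g h" using oct_ex by blast
  obtain a1 b1 c1 d1 e1 f1 g1 h1 where z: "z = oc a1 b1 c1 d1 e1 f1 g1 h1" using oct_ex by blast
  obtain a' b' c' d' e' f' g' h' where y: "y = oc a' b' c' d' e' f' g' h'" using oct_ex by blast
  show ?thesis unfolding x y z oc_add omul_oc oc_eq by (simp add: algebra_simps)
qed
lemma omul_scaleR_left: "omul (r *\<^sub>R x) y = r *\<^sub>R omul x y"
proof -
  obtain a b c d e f g h where x: "x = oc a b c d e f g h" using oct_ex by blast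
  obtain a' b' c' d' e' f' g' h' where y: "y = oc a' b' c' d' e' f' g' h'" using oct_ex by blast
  show ?thesis unfolding x y oc_scaleR omul_oc oc_eq by (simp add: algebra_simps)
qed
lemma omul_scaleR_right: "omul x (r *\<^sub>R y) = r *\<^sub>R omul x y"
proof -
  obtain a b c d e f g h where x: "x = oc a b c d e f g h" using oct_ex by blast
  obtain a' b' c' d' e' f' g' h' where y: "y = oc a' b' c' d' e' f' g' h'" using oct_ex by blast
  show ?thesis unfolding x y oc_scaleR omul_oc oc_eq by (simp add: algebra_simps)
qed
lemma inner_omul_skew: "inner (omul (oc 0 b c d e f g h) u) w = - inner u (omul (oc 0 b c d e f g h) w)"
proof -
  obtain a' b' c' d' e' f' g' h' where y: "u = oc a' b' c' d' e' f' g' h'" using oct_ex by blast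
  obtain a1 b1 c1 d1 e1 f1 g1 h1 where z: "w = oc a1 b1 c1 d1 e1 f1 g1 h1" using oct_ex by blast
  show ?thesis unfolding y z omul_oc inner_oc by (simp add: algebra_simps)
qed
lemma inner_omul_omul: "inner (omul x u) (omul x w) = (norm x)\<^sup>2 * inner u w"
proof -
  obtain a b c d e f g h where x: "x = oc a b c d e f g h" using oct_ex by blast
  obtain a' b' c' d' e' f' g' h' where y: "u = oc a' b' c' d' e' f' g' h'" using oct_ex by blast
  obtain a1 b1 c1 d1 e1 f1 g1 h1 where z: "w = oc a1 b1 c1 d1 e1 f1 g1 h1" using oct_ex by blast
  show ?thesis unfolding x y z omul_oc inner_oc norm_sq_oc by (simp add: power2_eq_square algebra_simps)
qed
lemma omul_alt: "omul (omul y (oconj x)) x = (norm x)\<^sup>2 *\<^sub>R y"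
proof -
  obtain a b c d e f g h where x: "x = oc a b c d e f g h" using oct_ex by blast
  obtain a' b' c' d' e' f' g' h' where y: "y = oc a' b' c' d' e' f' g' h'" using oct_ex by blast
  show ?thesis unfolding x y omul_oc oconj_oc norm_sq_oc oc_scaleR oc_eq by (simp add: power2_eq_square algebra_simps)
qed

definition iota :: "oct \<Rightarrow> complex \<Rightarrow> oct" where "iota I w = Re w *\<^sub>R oone + Im w *\<^sub>R I"

lemma omul_iota: 
  assumes "b\<^sup>2+c\<^sup>2+d\<^sup>2+e\<^sup>2+f\<^sup>2+g\<^sup>2+h\<^sup>2 = 1"
  shows "omul (iota (oc 0 b c d e f g h) w) (iota (oc 0 b c d e f g h) v) = iota (oc 0 b c d e f g h) (w * v)"
proof -
  have e: "Im w * Im v * (b\<^sup>2+c\<^sup>2+d\<^sup>2+e\<^sup>2+f\<^sup>2+g\<^sup>2+h\<^sup>2) = Im w * Im v" using assms by simp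
  show ?thesis unfolding iota_def oone_oc oc_scaleR oc_add omul_oc oc_eq
    using e by (simp add: algebra_simps power2_eq_square)
qed
lemma norm_iota:
  assumes "b\<^sup>2+c\<^sup>2+d\<^sup>2+e\<^sup>2+f\<^sup>2+g\<^sup>2+h\<^sup>2 = 1"
  shows "norm (iota (oc 0 b c d e f g h) w) = cmod w"
proof -
  have e: "(Im w)\<^sup>2 * (b\<^sup>2+c\<^sup>2+d\<^sup>2+e\<^sup>2+f\<^sup>2+g\<^sup>2+h\<^sup>2) = (Im w)\<^sup>2" using assms by simp
  have "(norm (iota (oc 0 b c d e f g h) w))\<^sup>2 = (cmod w)\<^sup>2"
    unfolding iota_def oone_oc oc_scaleR oc_add norm_sq_oc cmod_power2
    using e by (simp add: algebra_simps power2_eq_square)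
  then show ?thesis by (simp add: power2_eq_imp_eq)
qed


lemma pick_step:
  fixes d :: "nat \<Rightarrow> complex" and s :: real
  assumes sm: "\<And>w. norm w < 1 \<Longrightarrow> summable (\<lambda>n. d n * w^n)"
    and bd: "\<And>w. norm w < 1 \<Longrightarrow> norm (\<Sum>n. d n * w^n) \<le> 1"
    and s: "0 < s" "s < 1"
  shows "s * norm (d 1) \<le> 1 - s\<^sup>2 * (norm (d 0))\<^sup>2"
proof -
  define H where "H = (\<lambda>z. \<Sum>n. d n * z^n)"
  have Hder: "(H has_field_derivative (\<Sum>n. diffs d n * z^n)) (at z)" if "norm z < 1" for z
    unfolding H_def by (rule termdiffs_strong'[OF sm that]) 
  have H0: "H 0 = d 0" unfolding H_def by simp
  have d0: "norm (d 0) \<le> 1" using bd[of 0] by simp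
  define b where "b = of_real s * d 0"
  have nb: "norm b < 1"
  proof -
    have "norm b = s * norm (d 0)" using s by (simp add: b_def norm_mult)
    also have "\<dots> \<le> s * 1" using d0 s by (intro mult_left_mono) auto
    finally show ?thesis using s by simp
  qed
  have nsH: "norm (of_real s * H z) < 1" if "norm z < 1" for z
  proof -
    have "norm (of_real s * H z) = s * norm (H z)" using s by (simp add: norm_mult)
    also have "\<dots> \<le> s * 1" using bd[OF that] s unfolding H_def by (intro mult_left_mono) auto
    finally show ?thesis using s by simp
  qed
  define F where "F = (\<lambda>z. Moebius_function 0 b (of_real s * H z))"
  have holH: "(\<lambda>z. of_real s * H z) holomorphic_on ball 0 1"
  proof -
    have "\<forall>x\<in>ball 0 1. \<exists>f'. ((\<lambda>z. of_real s * H z) has_field_derivative f') (at x)"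
    proof
      fix x :: complex assume "x \<in> ball 0 1"
      then have "norm x < 1" by simp
      then show "\<exists>f'. ((\<lambda>z. of_real s * H z) has_field_derivative f') (at x)"
        using DERIV_cmult[OF Hder[of x], of "of_real s"] by blast
    qed
    then show ?thesis by (simp add: holomorphic_on_open)
  qed
  have holF: "F holomorphic_on ball 0 1"
    unfolding F_def
  proof -
    have img: "(\<lambda>z. of_real s * H z) ` ball 0 1 \<subseteq> ball 0 1" using nsH by auto
    show "(\<lambda>z. Moebius_function 0 b (of_real s * H z)) holomorphic_on ball 0 1"
      using holomorphic_on_compose_gen[OF holH Moebius_function_holomorphic[OF nb, of 0] img]
      by (simp add: o_def)
  qed
  have F0: "F 0 = 0" unfolding F_def H0 b_def[symmetric] by (simp add: Moebius_function_eq_zero)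
  have Fno: "norm (F z) < 1" if "norm z < 1" for z
    unfolding F_def using Moebius_function_norm_lt_1[OF nb nsH[OF that]] .
  have Sch: "norm (deriv F 0) \<le> 1"
    using Schwarz_Lemma(2)[OF holF F0 Fno, of 0] by simp
  have cbb: "cnj b * b = of_real ((norm b)\<^sup>2)"
    by (metis complex_norm_square mult.commute)
  have nb2: "(norm b)\<^sup>2 < 1" using nb by (simp add: power_less_one_iff)
  have den: "1 - cnj b * b \<noteq> 0"
  proof
    assume "1 - cnj b * b = 0"
    then have "of_real ((norm b)\<^sup>2) = (1::complex)" using cbb by simp
    then have "(norm b)\<^sup>2 = 1" using of_real_eq_1_iff by blast
    with nb2 show False by simp
  qed
  have "(F has_field_derivative (1 / (1 - cnj b * b)) * (of_real s * d 1)) (at 0)"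
  proof -
    have D1: "((\<lambda>z. of_real s * H z) has_field_derivative of_real s * d 1) (at 0)"
    proof -
      have "(\<Sum>n. diffs d n * 0^n) = d 1" by (simp add: diffs_def)
      then show ?thesis using DERIV_cmult[OF Hder[of 0], of "of_real s"] by simp
    qed
    have D2: "((\<lambda>u. (u - b) / (1 - cnj b * u)) has_field_derivative 1 / (1 - cnj b * b)) (at b)"
    proof -
      have a1: "((\<lambda>u. u - b) has_field_derivative 1 - 0) (at b)" by (intro derivative_intros)
      have a2: "((\<lambda>u. 1 - cnj b * u) has_field_derivative 0 - cnj b * 1) (at b)"
        by (intro derivative_intros DERIV_cmult DERIV_ident)
      have "((\<lambda>u. (u - b) / (1 - cnj b * u)) has_field_derivative
          ((1 - 0) * (1 - cnj b * b) - (b - b) * (0 - cnj b * 1)) / ((1 - cnj b * b) * (1 - cnj b * b))) (at b)"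
        using DERIV_divide[OF a1 a2] den by simp
      moreover have "((1 - 0) * (1 - cnj b * b) - (b - b) * (0 - cnj b * 1)) / ((1 - cnj b * b) * (1 - cnj b * b)) = 1 / (1 - cnj b * b)"
        using den by simp
      ultimately show ?thesis by simp
    qed
    have "((\<lambda>u. (u - b) / (1 - cnj b * u)) \<circ> (\<lambda>z. of_real s * H z) has_field_derivative
       (1 / (1 - cnj b * b)) * (of_real s * d 1)) (at 0)"
    proof -
      have D2': "((\<lambda>u. (u - b) / (1 - cnj b * u)) has_field_derivative 1 / (1 - cnj b * b)) (at (of_real s * H 0))"
        using D2 H0 b_def by simp
      show ?thesis using DERIV_chain[OF D2' D1] .
    qed
    then show ?thesis unfolding F_def Moebius_function_simple o_def by simp
  qed
  then have "deriv F 0 = (1 / (1 - cnj b * b)) * (of_real s * d 1)" by (rule DERIV_imp_deriv)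
  with cbb have dF: "deriv F 0 = of_real (s / (1 - (norm b)\<^sup>2)) * d 1" by simp
  define N where "N = (norm b)\<^sup>2"
  have N: "0 \<le> N" "N < 1" using nb2 by (auto simp: N_def)
  have "norm (deriv F 0) = s / (1 - N) * norm (d 1)"
  proof -
    have e: "(1::complex) - of_real N = of_real (1 - N)" by simp
    show ?thesis using dF N s unfolding N_def[symmetric]
      by (simp add: norm_mult norm_divide abs_of_pos e del: of_real_diff)
  qed
  with Sch have le: "s / (1 - N) * norm (d 1) \<le> 1" by simp
  have "s * norm (d 1) = (s / (1 - N) * norm (d 1)) * (1 - N)" using N by (simp add: field_simps)
  also have "\<dots> \<le> 1 * (1 - N)" using le N by (intro mult_right_mono) auto
  finally have "s * norm (d 1) \<le> 1 - N" by simp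
  moreover have "N = s\<^sup>2 * (norm (d 0))\<^sup>2" unfolding N_def b_def using s
    by (simp add: norm_mult power_mult_distrib)
  ultimately show ?thesis by simp
qed

lemma pick:
  fixes d :: "nat \<Rightarrow> complex"
  assumes sm: "\<And>w. norm w < 1 \<Longrightarrow> summable (\<lambda>n. d n * w^n)"
    and bd: "\<And>w. norm w < 1 \<Longrightarrow> norm (\<Sum>n. d n * w^n) \<le> 1"
  shows "norm (d 1) \<le> 1 - (norm (d 0))\<^sup>2"
proof -
  have ev: "eventually (\<lambda>s. s * norm (d 1) \<le> 1 - s\<^sup>2 * (norm (d 0))\<^sup>2) (at_left (1::real))"
  proof (rule eventually_mono[OF eventually_at_left_real[of 0 1]])
    fix s :: real assume "s \<in> {0<..<1}"
    then show "s * norm (d 1) \<le> 1 - s\<^sup>2 * (norm (d 0))\<^sup>2" using pick_step[OF sm bd, of s] by simp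
  qed simp
  have t1: "((\<lambda>s. s * norm (d 1)) \<longlongrightarrow> 1 * norm (d 1)) (at_left (1::real))" by (intro tendsto_intros)
  have t2: "((\<lambda>s. 1 - s\<^sup>2 * (norm (d 0))\<^sup>2) \<longlongrightarrow> 1 - 1\<^sup>2 * (norm (d 0))\<^sup>2) (at_left (1::real))"
    by (intro tendsto_intros)
  from tendsto_le[OF trivial_limit_at_left_real t2 t1 ev] show ?thesis by simp
qed

lemma average:
  fixes c :: "nat \<Rightarrow> complex"
  assumes sm: "\<And>w. norm w < 1 \<Longrightarrow> summable (\<lambda>n. c n * w^n)"
    and k: "k \<ge> 1" and w: "norm w < 1"
  shows "(\<lambda>m. c (m*k) * (w^k)^m) sums ((1 / of_nat k) * (\<Sum>j<k. \<Sum>n. c n * (exp (2 * of_real pi * \<i> / of_nat k) ^ j * w)^n))"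
proof -
  define \<rho> where "\<rho> = exp (2 * of_real pi * \<i> / of_nat k)"
  have \<rho>n: "\<rho>^n = exp (2 * of_real pi * \<i> * of_nat n / of_nat k)" for n
  proof -
    have "\<rho>^n = exp (of_nat n * (2 * of_real pi * \<i> / of_nat k))" unfolding \<rho>_def by (rule exp_of_nat_mult[symmetric])
    then show ?thesis by (simp add: mult_ac)
  qed
  have n\<rho>: "norm \<rho> = 1" unfolding \<rho>_def by (simp add: norm_exp_eq_Re)
  have \<rho>k: "\<rho>^k = 1" using \<rho>n[of k] k by simp
  have S: "(\<Sum>j<k. (\<rho>^n)^j) = (if k dvd n then of_nat k else 0)" for n
  proof (cases "k dvd n")
    case True
    then have "\<rho>^n = 1" using \<rho>n[of n] complex_root_unity_eq_1[OF k, of n] by simp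
    then show ?thesis using True by simp
  next
    case False
    then have ne: "\<rho>^n \<noteq> 1" using \<rho>n[of n] complex_root_unity_eq_1[OF k, of n] by simp
    have "(\<rho>^n)^k = 1" by (metis \<rho>k power_mult mult.commute power_one)
    then show ?thesis using False ne by (simp add: sum_gp_strict)
  qed
  have each: "(\<lambda>n. c n * (\<rho>^j * w)^n) sums (\<Sum>n. c n * (\<rho>^j * w)^n)" for j
    by (rule summable_sums, rule sm) (simp add: norm_mult norm_power n\<rho> w)
  have "(\<lambda>n. \<Sum>j<k. c n * (\<rho>^j * w)^n) sums (\<Sum>j<k. \<Sum>n. c n * (\<rho>^j * w)^n)"
    by (rule sums_sum) (rule each)
  then have "(\<lambda>n. (1 / of_nat k) * (\<Sum>j<k. c n * (\<rho>^j * w)^n)) sums ((1 / of_nat k) * (\<Sum>j<k. \<Sum>n. c n * (\<rho>^j * w)^n))"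
    by (rule sums_mult)
  moreover have "(1 / of_nat k) * (\<Sum>j<k. c n * (\<rho>^j * w)^n) = (if k dvd n then c n * w^n else 0)" for n
  proof -
    have "(\<Sum>j<k. c n * (\<rho>^j * w)^n) = c n * w^n * (\<Sum>j<k. (\<rho>^n)^j)"
      by (simp add: sum_distrib_left power_mult_distrib mult_ac flip: power_mult)
    then show ?thesis using S[of n] k by simp
  qed
  ultimately have A: "(\<lambda>n. if k dvd n then c n * w^n else 0) sums ((1 / of_nat k) * (\<Sum>j<k. \<Sum>n. c n * (\<rho>^j * w)^n))"
    by simp
  have sm_k: "strict_mono (\<lambda>m. m * k)" using k by (auto simp: strict_mono_def)
  have "(\<lambda>m. (\<lambda>n. if k dvd n then c n * w^n else 0) (m * k)) sums ((1 / of_nat k) * (\<Sum>j<k. \<Sum>n. c n * (\<rho>^j * w)^n))"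
    by (rule iffD2[OF sums_mono_reindex[OF sm_k] A]) (auto simp: dvd_def mult.commute)
  moreover have "(w ^ m) ^ k = (w ^ k) ^ m" for m by (metis power_mult mult.commute)
  ultimately show ?thesis unfolding \<rho>_def[symmetric] by (simp add: power_mult mult.commute)
qed

lemma kth_root:
  fixes z :: complex
  assumes k: "k \<ge> 1" and z: "norm z < 1"
  shows "\<exists>w. w^k = z \<and> norm w < 1"
proof (cases "z = 0")
  case True
  then show ?thesis using k by (intro exI[of _ 0]) (simp add: power_0_left)
next
  case False
  define w where "w = exp (Ln z / of_nat k)"
  have "w^k = exp (of_nat k * (Ln z / of_nat k))" unfolding w_def by (rule exp_of_nat_mult[symmetric])
  also have "\<dots> = z" using k False by simp
  finally have wk: "w^k = z" .
  have "norm w < 1"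
  proof (rule ccontr)
    assume "\<not> norm w < 1"
    then have "1 \<le> norm w ^ k" by (simp add: one_le_power)
    moreover have "norm w ^ k = norm z" using wk by (metis norm_power)
    ultimately show False using z by simp
  qed
  then show ?thesis using wk by blast
qed

lemma wiener:
  fixes c :: "nat \<Rightarrow> complex"
  assumes sm: "\<And>w. norm w < 1 \<Longrightarrow> summable (\<lambda>n. c n * w^n)"
    and bd: "\<And>w. norm w < 1 \<Longrightarrow> norm (\<Sum>n. c n * w^n) \<le> 1"
    and k: "k \<ge> 1"
  shows "norm (c k) \<le> 1 - (norm (c 0))\<^sup>2"
proof -
  define \<rho> where "\<rho> = exp (2 * of_real pi * \<i> / of_nat k)"
  have n\<rho>: "norm \<rho> = 1" unfolding \<rho>_def by (simp add: norm_exp_eq_Re)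
  have P: "summable (\<lambda>m. c (m*k) * z^m) \<and> norm (\<Sum>m. c (m*k) * z^m) \<le> 1" if z: "norm z < 1" for z
  proof -
    obtain w where w: "w^k = z" "norm w < 1" using kth_root[OF k z] by blast
    have S: "(\<lambda>m. c (m*k) * z^m) sums ((1 / of_nat k) * (\<Sum>j<k. \<Sum>n. c n * (\<rho> ^ j * w)^n))"
      using average[OF sm k w(2)] w(1) unfolding \<rho>_def by simp
    have "norm ((1 / of_nat k) * (\<Sum>j<k. \<Sum>n. c n * (\<rho> ^ j * w)^n)) \<le> (1 / of_nat k) * (\<Sum>j<k. norm (\<Sum>n. c n * (\<rho> ^ j * w)^n))"
      by (simp add: norm_mult norm_divide norm_sum divide_right_mono)
    also have "\<dots> \<le> (1 / of_nat k) * (\<Sum>j<k. 1)"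
      by (intro mult_left_mono sum_mono bd) (auto simp: norm_mult norm_power n\<rho> w(2))
    also have "\<dots> = 1" using k by simp
    finally show ?thesis using S by (simp add: sums_summable sums_unique[symmetric])
  qed
  have "norm (c (1*k)) \<le> 1 - (norm (c (0*k)))\<^sup>2"
    by (rule pick[of "\<lambda>m. c (m*k)"]) (use P in auto)
  then show ?thesis by simp
qed


lemma iota_exists: "\<exists>b c d e f g h \<beta>. b\<^sup>2+c\<^sup>2+d\<^sup>2+e\<^sup>2+f\<^sup>2+g\<^sup>2+h\<^sup>2 = 1 \<and> iota (oc 0 b c d e f g h) \<beta> = z"
proof -
  obtain z0 z1 z2 z3 z4 z5 z6 z7 where z: "z = oc z0 z1 z2 z3 z4 z5 z6 z7" using oct_ex by blast
  define S where "S = z1\<^sup>2+z2\<^sup>2+z3\<^sup>2+z4\<^sup>2+z5\<^sup>2+z6\<^sup>2+z7\<^sup>2"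
  show ?thesis
  proof (cases "S = 0")
    case True
    then have "z1 = 0 \<and> z2 = 0 \<and> z3 = 0 \<and> z4 = 0 \<and> z5 = 0 \<and> z6 = 0 \<and> z7 = 0"
      unfolding S_def by (simp add: add_nonneg_eq_0_iff)
    then have "iota (oc 0 1 0 0 0 0 0 0) (Complex z0 0) = z"
      unfolding z iota_def oone_oc oc_scaleR oc_add by simp
    then show ?thesis by (intro exI[of _ 1] exI[of _ 0] exI) simp
  next
    case False
    have Sp: "S > 0" using False unfolding S_def by (metis S_def add_nonneg_nonneg zero_le_power2 less_eq_real_def)
    define n where "n = sqrt S"
    have n: "n > 0" "n\<^sup>2 = S" using Sp by (auto simp: n_def)
    have "(z1/n)\<^sup>2+(z2/n)\<^sup>2+(z3/n)\<^sup>2+(z4/n)\<^sup>2+(z5/n)\<^sup>2+(z6/n)\<^sup>2+(z7/n)\<^sup>2 = S / n\<^sup>2"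
      unfolding S_def by (simp add: power_divide add_divide_distrib)
    also have "\<dots> = 1" using n Sp by simp
    finally have one: "(z1/n)\<^sup>2+(z2/n)\<^sup>2+(z3/n)\<^sup>2+(z4/n)\<^sup>2+(z5/n)\<^sup>2+(z6/n)\<^sup>2+(z7/n)\<^sup>2 = 1" .
    have "iota (oc 0 (z1/n) (z2/n) (z3/n) (z4/n) (z5/n) (z6/n) (z7/n)) (Complex z0 n) = z"
      unfolding z iota_def oone_oc oc_scaleR oc_add oc_eq using n by simp
    then show ?thesis using one by blast
  qed
qed

lemma omul_iota_expand: "omul (iota I w) u = Re w *\<^sub>R u + Im w *\<^sub>R omul I u"
  unfolding iota_def by (simp add: omul_add_left omul_scaleR_left omul_oone_left)

lemma opow_iota:
  assumes "b\<^sup>2+c\<^sup>2+d\<^sup>2+e\<^sup>2+f\<^sup>2+g\<^sup>2+h\<^sup>2 = 1"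
  shows "opow (iota (oc 0 b c d e f g h) w) n = iota (oc 0 b c d e f g h) (w^n)"
proof (induction n)
  case 0
  then show ?case by (simp add: iota_def)
next
  case (Suc n)
  then show ?case by (simp add: omul_iota[OF assms])
qed

lemma rep_intro:
  assumes "b\<^sup>2+c\<^sup>2+d\<^sup>2+e\<^sup>2+f\<^sup>2+g\<^sup>2+h\<^sup>2 = (1::real)" "v \<noteq> 0"
    "a0 = omul (iota (oc 0 b c d e f g h) \<alpha>) v" "ak = omul (iota (oc 0 b c d e f g h) \<beta>) v"
  shows "\<exists>b c d e f g h \<alpha> \<beta> v. b\<^sup>2+c\<^sup>2+d\<^sup>2+e\<^sup>2+f\<^sup>2+g\<^sup>2+h\<^sup>2 = 1 \<and> v \<noteq> 0 \<and>
       a0 = omul (iota (oc 0 b c d e f g h) \<alpha>) v \<and> ak = omul (iota (oc 0 b c d e f g h) \<beta>) v"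
  using assms by blast

lemma coeff_bound:
  fixes a :: "nat \<Rightarrow> oct"
  assumes conv: "\<And>x::oct. norm x < 1 \<Longrightarrow> summable (\<lambda>k. omul (opow x k) (a k))"
    and bnd: "\<And>x::oct. norm x < 1 \<Longrightarrow> norm (\<Sum>k. omul (opow x k) (a k)) \<le> 1"
    and k: "k \<ge> 1"
  shows "norm (a k) \<le> 1 - (norm (a 0))\<^sup>2"
proof -
  have f0: "(\<Sum>n. omul (opow 0 n) (a n)) = a 0"
  proof -
    have e: "omul (opow 0 n) (a n) = (if n = 0 then a 0 else 0)" for n
      by (cases n) (simp_all add: omul_oone_left omul_zero_left)
    have "(\<Sum>n. omul (opow 0 n) (a n)) = (\<Sum>n. if n = 0 then a 0 else 0)"
      by (simp only: e)
    also have "\<dots> = a 0" using sums_single[of 0 "\<lambda>_. a 0"] by (simp add: sums_iff)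
    finally show ?thesis .
  qed
  have a0: "norm (a 0) \<le> 1" using bnd[of 0] f0 by simp
  show ?thesis
  proof (cases "a k = 0")
    case True
    then show ?thesis using a0 by (simp add: power_le_one)
  next
    case akn: False
    have "\<exists>b c d e f g h \<alpha> \<beta> v. b\<^sup>2+c\<^sup>2+d\<^sup>2+e\<^sup>2+f\<^sup>2+g\<^sup>2+h\<^sup>2 = 1 \<and> v \<noteq> 0 \<and>
       a 0 = omul (iota (oc 0 b c d e f g h) \<alpha>) v \<and> a k = omul (iota (oc 0 b c d e f g h) \<beta>) v"
    proof (cases "a 0 = 0")
      case True
      have h0: "a 0 = omul (iota (oc 0 1 0 0 0 0 0 0) 0) (a k)"
        using True by (simp add: iota_def omul_zero_left)
      have h1: "a k = omul (iota (oc 0 1 0 0 0 0 0 0) 1) (a k)" by (simp add: iota_def omul_oone_left)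
      have one: "(1::real)\<^sup>2+0\<^sup>2+0\<^sup>2+0\<^sup>2+0\<^sup>2+0\<^sup>2+0\<^sup>2 = 1" by simp
      show ?thesis by (rule rep_intro[OF one akn h0 h1])
    next
      case False
      define z where "z = (1 / (norm (a 0))\<^sup>2) *\<^sub>R omul (a k) (oconj (a 0))"
      have zk: "omul z (a 0) = a k" using False unfolding z_def by (simp add: omul_scaleR_left omul_alt)
      obtain b c d e f g h \<beta> where one: "b\<^sup>2+c\<^sup>2+d\<^sup>2+e\<^sup>2+f\<^sup>2+g\<^sup>2+h\<^sup>2 = 1" and zb: "iota (oc 0 b c d e f g h) \<beta> = z"
        using iota_exists by blast
      have h0: "a 0 = omul (iota (oc 0 b c d e f g h) 1) (a 0)" by (simp add: iota_def omul_oone_left)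
      have h1: "a k = omul (iota (oc 0 b c d e f g h) \<beta>) (a 0)" using zk zb by simp
      show ?thesis by (rule rep_intro[OF one False h0 h1])
    qed
    then obtain b c d e f g h \<alpha> \<beta> v where I1: "b\<^sup>2+c\<^sup>2+d\<^sup>2+e\<^sup>2+f\<^sup>2+g\<^sup>2+h\<^sup>2 = 1" and vn: "v \<noteq> 0"
      and A0: "a 0 = omul (iota (oc 0 b c d e f g h) \<alpha>) v" and AK: "a k = omul (iota (oc 0 b c d e f g h) \<beta>) v"
      by blast
    define I where "I = oc 0 b c d e f g h"
    have nI2: "(norm I)\<^sup>2 = 1" using I1 norm_sq_oc[of 0 b c d e f g h] unfolding I_def by simp
    have nI: "norm I = 1" using power2_eq_imp_eq[of "norm I" 1] nI2 by simp
    define nv where "nv = norm v"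
    have nv: "nv > 0" using vn by (simp add: nv_def)
    define \<phi> where "\<phi> = (\<lambda>u. Complex (inner u v / nv) (inner u (omul I v) / nv))"
    have skew: "inner (omul I u) w = - inner u (omul I w)" for u w unfolding I_def by (rule inner_omul_skew)
    have II: "inner (omul I u) (omul I w) = inner u w" for u w using inner_omul_omul[of I u w] nI by simp
    have \<phi>I: "\<phi> (omul I u) = \<i> * \<phi> u" for u
    proof -
      have "\<phi> (omul I u) = Complex (inner (omul I u) v / nv) (inner (omul I u) (omul I v) / nv)"
        by (simp add: \<phi>_def)
      also have "\<dots> = Complex (- inner u (omul I v) / nv) (inner u v / nv)"
        using skew[of u v] II[of u v] by simp
      also have "\<dots> = \<i> * \<phi> u" by (simp add: \<phi>_def complex_eq_iff)
      finally show ?thesis .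
    qed
    have \<phi>add: "\<phi> (u + w) = \<phi> u + \<phi> w" for u w
      unfolding \<phi>_def by (simp add: complex_eq_iff inner_add_left add_divide_distrib)
    have \<phi>scale: "\<phi> (r *\<^sub>R u) = r *\<^sub>R \<phi> u" for r u
      unfolding \<phi>_def by (simp add: complex_eq_iff)
    have \<phi>iota: "\<phi> (omul (iota I w) u) = w * \<phi> u" for w u
      unfolding omul_iota_expand \<phi>add \<phi>scale \<phi>I
      by (simp add: complex_eq_iff scaleR_conv_of_real)
    have vIv: "inner v (omul I v) = 0" using skew[of v v] by (simp add: inner_commute)
    have \<phi>v: "\<phi> v = of_real nv"
    proof -
      have "inner v v = nv * nv" by (simp add: nv_def power2_norm_eq_inner[symmetric] power2_eq_square)
      then show ?thesis using nv vIv by (simp add: \<phi>_def complex_eq_iff)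
    qed
    have \<phi>norm: "norm (\<phi> u) \<le> norm u" for u
    proof -
      define e1 where "e1 = (1/nv) *\<^sub>R v"
      define e2 where "e2 = (1/nv) *\<^sub>R omul I v"
      have ne2: "norm (omul I v) = nv" using nI by (simp add: norm_omul nv_def)
      have e11: "inner e1 e1 = 1" unfolding e1_def using nv
        by (simp add: nv_def power2_norm_eq_inner[symmetric] power2_eq_square)
      have e22: "inner e2 e2 = 1" unfolding e2_def using nv ne2
        by (simp add: power2_norm_eq_inner[symmetric] power2_eq_square)
      have e12: "inner e1 e2 = 0" unfolding e1_def e2_def using vIv by simp
      define x where "x = inner u e1"
      define y where "y = inner u e2"
      have \<phi>xy: "\<phi> u = Complex x y" unfolding \<phi>_def x_def y_def e1_def e2_def by simp
      define p where "p = x *\<^sub>R e1 + y *\<^sub>R e2"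
      have up: "inner u p = x\<^sup>2 + y\<^sup>2"
        by (simp add: p_def inner_add_right x_def y_def power2_eq_square)
      have pp: "inner p p = x\<^sup>2 + y\<^sup>2"
        by (simp add: p_def inner_add_left inner_add_right e11 e22 e12 inner_commute[of e2 e1] power2_eq_square)
      have pu: "inner p u = inner u p" by (rule inner_commute)
      have "0 \<le> inner (u - p) (u - p)" by simp
      also have "\<dots> = inner u u - inner u p - (inner p u - inner p p)"
        by (simp add: inner_diff_left inner_diff_right)
      also have "\<dots> = inner u u - x\<^sup>2 - y\<^sup>2" unfolding pu up pp by simp
      finally have "x\<^sup>2 + y\<^sup>2 \<le> (norm u)\<^sup>2" by (simp add: power2_norm_eq_inner)
      then have "(norm (\<phi> u))\<^sup>2 \<le> (norm u)\<^sup>2" unfolding \<phi>xy by (simp add: cmod_power2)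
      then show ?thesis by (simp add: power2_le_iff_abs_le)
    qed
    have bl: "bounded_linear \<phi>"
      by (rule bounded_linear_intro[where K=1]) (use \<phi>add \<phi>scale \<phi>norm in auto)
    define cc where "cc = (\<lambda>n. \<phi> (a n))"
    have S: "(\<lambda>n. cc n * w^n) sums \<phi> (\<Sum>n. omul (opow (iota I w) n) (a n))" if w: "norm w < 1" for w
    proof -
      have nx: "norm (iota I w) < 1" using w norm_iota[OF I1] unfolding I_def by simp
      have "(\<lambda>n. \<phi> (omul (opow (iota I w) n) (a n))) sums \<phi> (\<Sum>n. omul (opow (iota I w) n) (a n))"
        by (rule bounded_linear.sums[OF bl]) (rule summable_sums[OF conv[OF nx]])
      moreover have "\<phi> (omul (opow (iota I w) n) (a n)) = cc n * w^n" for n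
        unfolding I_def opow_iota[OF I1] unfolding I_def[symmetric] \<phi>iota cc_def by simp
      ultimately show ?thesis by simp
    qed
    have W: "norm (cc k) \<le> 1 - (norm (cc 0))\<^sup>2"
    proof (rule wiener[OF _ _ k])
      fix w :: complex assume w: "norm w < 1"
      show "summable (\<lambda>n. cc n * w ^ n)" using S[OF w] by (rule sums_summable)
      have nx: "norm (iota I w) < 1" using w norm_iota[OF I1] unfolding I_def by simp
      have "norm (\<Sum>n. cc n * w ^ n) = norm (\<phi> (\<Sum>n. omul (opow (iota I w) n) (a n)))"
        using S[OF w] by (simp add: sums_unique[symmetric])
      also have "\<dots> \<le> 1" using \<phi>norm bnd[OF nx] order_trans by blast
      finally show "norm (\<Sum>n. cc n * w ^ n) \<le> 1" .
    qed
    have niota: "norm (iota I u) = cmod u" for u using norm_iota[OF I1] unfolding I_def by simp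
    have "cc 0 = \<alpha> * of_real nv" unfolding cc_def A0 I_def[symmetric] \<phi>iota \<phi>v ..
    moreover have "cc k = \<beta> * of_real nv" unfolding cc_def AK I_def[symmetric] \<phi>iota \<phi>v ..
    moreover have "norm (a 0) = cmod \<alpha> * nv" unfolding A0 I_def[symmetric] norm_omul niota nv_def ..
    moreover have "norm (a k) = cmod \<beta> * nv" unfolding AK I_def[symmetric] norm_omul niota nv_def ..
    ultimately show ?thesis using W nv by (simp add: norm_mult)
  qed
qed


lemma f_at_zero: "(\<Sum>n. omul (opow 0 n) (a n)) = a 0"
proof -
  have e: "omul (opow 0 n) (a n) = (if n = 0 then a 0 else 0)" for n
    by (cases n) (simp_all add: omul_oone_left omul_zero_left)
  have "(\<Sum>n. omul (opow 0 n) (a n)) = (\<Sum>n. if n = 0 then a 0 else 0)"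
    by (simp only: e)
  also have "\<dots> = a 0" using sums_single[of 0 "\<lambda>_. a 0"] by (simp add: sums_iff)
  finally show ?thesis .
qed

lemma norm_opow: "norm (opow x k) = norm x ^ k"
proof (induction k)
  case 0
  then show ?case by (simp add: oone_def norm_Pair)
next
  case (Suc k)
  then show ?case by (simp add: norm_omul)
qed

lemma final_ineq:
  fixes A m :: real
  assumes A: "0 \<le> A" "A \<le> 1" and m: "0 < m" "m \<le> 2"
  shows "A powr m + (1 - A\<^sup>2) * (m / 2) \<le> 1"
proof (cases "A = 0")
  case True
  then show ?thesis using m by simp
next
  case False
  then have Ap: "A > 0" using A by simp
  have "(A\<^sup>2) powr (m/2) * 1 powr (1 - m/2) \<le> (m/2) * A\<^sup>2 + (1 - m/2) * 1"
    using m Ap by (intro Youngs_inequality_0) auto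
  moreover have "(A\<^sup>2) powr (m/2) = A powr m"
  proof -
    have "(A\<^sup>2) powr (m/2) = (A powr 2) powr (m/2)" using Ap by simp
    also have "\<dots> = A powr m" by (simp add: powr_powr)
    finally show ?thesis .
  qed
  ultimately show ?thesis by (simp add: algebra_simps)
qed

lemma bohr_main:
  fixes m lam q R :: real and a :: "nat \<Rightarrow> oct" and x :: oct
  assumes m: "0 < m" "m \<le> 2" and lam: "lam \<ge> 0" and q: "q \<ge> 1"
    and conv: "\<And>x::oct. norm x < 1 \<Longrightarrow> summable (\<lambda>k. omul (opow x k) (a k))"
    and bnd: "\<And>x::oct. norm x < 1 \<Longrightarrow> norm (\<Sum>k. omul (opow x k) (a k)) \<le> 1"
    and R: "0 < R" "R < 1" "- m / 2 + R / (1 - R) + lam * (R / (1 - R)) powr q = 0"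
    and x: "norm x < 1" "norm x \<le> R"
  shows "summable (\<lambda>k. norm (omul (opow x k) (a k))) \<and>
         norm (a 0) powr m + (\<Sum>k. norm (omul (opow x (Suc k)) (a (Suc k))))
           + lam * norm ((\<Sum>k. omul (opow x k) (a k)) - a 0) powr q \<le> 1"
proof -
  define r where "r = norm x"
  define A where "A = norm (a 0)"
  define B where "B = 1 - A\<^sup>2"
  define \<rho> where "\<rho> = R / (1 - R)"
  have r: "0 \<le> r" "r < 1" "r \<le> R" using x by (auto simp: r_def)
  have A: "0 \<le> A" "A \<le> 1" using bnd[of 0] f_at_zero[of a] by (auto simp: A_def)
  have B: "0 \<le> B" "B \<le> 1" using A by (auto simp: B_def power_le_one)
  have nk: "norm (omul (opow x k) (a k)) = r^k * norm (a k)" for k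
    by (simp add: norm_omul norm_opow r_def)
  have akB: "norm (a k) \<le> B" if "k \<ge> 1" for k
    using coeff_bound[OF conv bnd that] by (simp add: A_def B_def)
  have ak1: "norm (a k) \<le> 1" for k
    using akB[of k] B A by (cases "k = 0") (auto simp: A_def)
  have sm: "summable (\<lambda>k. norm (omul (opow x k) (a k)))"
  proof (rule summable_comparison_test[OF _ summable_geometric[of r]])
    show "\<exists>N. \<forall>n\<ge>N. norm (norm (omul (opow x n) (a n))) \<le> r ^ n"
      using ak1 r by (auto simp: nk intro!: mult_left_le)
  qed (use r in simp)
  have sm1: "summable (\<lambda>k. norm (omul (opow x (Suc k)) (a (Suc k))))"
    using summable_Suc_iff[of "\<lambda>k. norm (omul (opow x k) (a k))"] sm by (simp del: opow.simps)
  have geo: "(\<lambda>k. B * r * r^k) sums (B * r * (1 / (1 - r)))"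
    using r by (intro sums_mult geometric_sums) simp
  have T: "(\<Sum>k. norm (omul (opow x (Suc k)) (a (Suc k)))) \<le> B * r * (1 / (1 - r))"
  proof -
    have "(\<Sum>k. norm (omul (opow x (Suc k)) (a (Suc k)))) \<le> (\<Sum>k. B * r * r^k)"
    proof (rule suminf_le[OF _ sm1 sums_summable[OF geo]])
      fix k
      have "norm (omul (opow x (Suc k)) (a (Suc k))) = r^(Suc k) * norm (a (Suc k))" by (rule nk)
      also have "\<dots> \<le> r^(Suc k) * B" using akB[of "Suc k"] r by (intro mult_left_mono) auto
      finally show "norm (omul (opow x (Suc k)) (a (Suc k))) \<le> B * r * r^k" by (simp add: mult_ac)
    qed
    then show ?thesis using sums_unique[OF geo] by simp
  qed
  have rho: "B * r * (1 / (1 - r)) \<le> B * \<rho>"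
  proof -
    have le: "r / (1 - r) \<le> R / (1 - R)" using r R by (intro frac_le) auto
    have "B * (r / (1 - r)) \<le> B * (R / (1 - R))" by (rule mult_left_mono[OF le B(1)])
    then show ?thesis by (simp add: \<rho>_def)
  qed
  define D where "D = norm ((\<Sum>k. omul (opow x k) (a k)) - a 0)"
  have D: "0 \<le> D" "D \<le> B * \<rho>"
  proof -
    show "0 \<le> D" by (simp add: D_def)
    have "(\<Sum>k. omul (opow x (Suc k)) (a (Suc k))) = (\<Sum>k. omul (opow x k) (a k)) - omul (opow x 0) (a 0)"
      by (rule suminf_split_head[OF conv[OF x(1)]])
    then have "(\<Sum>k. omul (opow x k) (a k)) - a 0 = (\<Sum>k. omul (opow x (Suc k)) (a (Suc k)))"
      by (simp add: omul_oone_left)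
    then have "D = norm (\<Sum>k. omul (opow x (Suc k)) (a (Suc k)))" by (simp add: D_def)
    also have "\<dots> \<le> (\<Sum>k. norm (omul (opow x (Suc k)) (a (Suc k))))" by (rule summable_norm[OF sm1])
    finally show "D \<le> B * \<rho>" using T rho by linarith
  qed
  have rhop: "0 \<le> \<rho>" using R by (simp add: \<rho>_def)
  have Dq: "D powr q \<le> B * \<rho> powr q"
  proof -
    have "D powr q \<le> (B * \<rho>) powr q" using D q by (intro powr_mono2) auto
    also have "\<dots> = B powr q * \<rho> powr q" using B rhop by (simp add: powr_mult)
    also have "\<dots> \<le> B * \<rho> powr q"
    proof (rule mult_right_mono)
      show "B powr q \<le> B"
      proof (cases "B = 0")
        case True then show ?thesis by simp
      next
        case False
        then have "B powr q \<le> B powr 1" using B q by (intro powr_mono') auto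
        then show ?thesis using B by simp
      qed
    qed simp
    finally show ?thesis .
  qed
  have eq: "\<rho> + lam * \<rho> powr q = m / 2" using R(3) unfolding \<rho>_def[symmetric] by linarith
  have "A powr m + (\<Sum>k. norm (omul (opow x (Suc k)) (a (Suc k)))) + lam * D powr q
        \<le> A powr m + B * \<rho> + lam * (B * \<rho> powr q)"
    using T rho Dq lam by (intro add_mono mult_left_mono) auto
  also have "\<dots> = A powr m + B * (\<rho> + lam * \<rho> powr q)" by (simp add: algebra_simps)
  also have "\<dots> = A powr m + (1 - A\<^sup>2) * (m / 2)" by (simp add: eq B_def)
  also have "\<dots> \<le> 1" by (rule final_ineq[OF A m])
  finally show ?thesis using sm by (simp add: A_def D_def)
qed


theorem theorem1p2:
  fixes m lam q :: real and a :: "nat \<Rightarrow> oct"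
  assumes m: "0 < m" "m \<le> 2" and lam: "lam \<ge> 0" and q: "q \<ge> 1"
    and conv: "\<And>x::oct. norm x < 1 \<Longrightarrow> summable (\<lambda>k. omul (opow x k) (a k))"
    and bnd: "\<And>x::oct. norm x < 1 \<Longrightarrow> norm (\<Sum>k. omul (opow x k) (a k)) \<le> 1"
  shows "(\<exists>!R. 0 < R \<and> R < 1 \<and> - m / 2 + R / (1 - R) + lam * (R / (1 - R)) powr q = 0)
       \<and> (\<forall>R. 0 < R \<and> R < 1 \<and> - m / 2 + R / (1 - R) + lam * (R / (1 - R)) powr q = 0 \<longrightarrow>
            (\<forall>x::oct. norm x < 1 \<and> norm x \<le> R \<longrightarrow>
               summable (\<lambda>k. norm (omul (opow x k) (a k))) \<and>
               norm (a 0) powr m + (\<Sum>k. norm (omul (opow x (Suc k)) (a (Suc k))))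
                 + lam * norm ((\<Sum>k. omul (opow x k) (a k)) - a 0) powr q \<le> 1))
       \<and> (\<forall>x::oct. norm x < 1 \<and> norm x \<le> 2 - sqrt 3 \<longrightarrow>
            summable (\<lambda>k. norm (omul (opow x k) (a k))) \<and>
            (\<Sum>k. norm (omul (opow x k) (a k)))
              + (norm ((\<Sum>k. omul (opow x k) (a k)) - a 0))\<^sup>2 \<le> 1)"
proof -
  define hh where "hh = (\<lambda>R::real. - m / 2 + R / (1 - R) + lam * (R / (1 - R)) powr q)"
  have mono: "hh R1 < hh R2" if "0 \<le> R1" "R1 < R2" "R2 < 1" for R1 R2
  proof -
    have l1: "R1 / (1 - R1) < R2 / (1 - R2)" using that by (intro frac_less) auto
    have "(R1 / (1 - R1)) powr q \<le> (R2 / (1 - R2)) powr q"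
      using l1 that q by (intro powr_mono2) auto
    then have "lam * (R1 / (1 - R1)) powr q \<le> lam * (R2 / (1 - R2)) powr q"
      using lam by (rule mult_left_mono)
    then show ?thesis using l1 unfolding hh_def by linarith
  qed
  have P1: "\<exists>!R. 0 < R \<and> R < 1 \<and> - m / 2 + R / (1 - R) + lam * (R / (1 - R)) powr q = 0"
  proof -
    have c1: "continuous_on {0..2/3} (\<lambda>R::real. R / (1 - R))"
      by (intro continuous_intros) auto
    have c2: "continuous_on {0..2/3} (\<lambda>R::real. (R / (1 - R)) powr q)"
      by (rule continuous_on_powr'[OF c1 continuous_on_const]) (use q in auto)
    have c: "continuous_on {0..2/3} hh"
      unfolding hh_def by (intro continuous_on_add continuous_on_const continuous_on_mult c1 c2)
    have h0: "hh 0 \<le> 0" using m by (simp add: hh_def)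
    have "hh 0 < 0" using m by (simp add: hh_def)
    have "0 \<le> lam * (2::real) powr q" using lam by simp
    then have h23: "0 \<le> hh (2/3)" using m by (simp add: hh_def)
    obtain R0 where R0: "0 \<le> R0" "R0 \<le> 2/3" "hh R0 = 0"
      using IVT'[of hh 0 0 "2/3", OF h0 h23 _ c] by auto
    have "R0 \<noteq> 0" using R0 \<open>hh 0 < 0\<close> by auto
    then have R0': "0 < R0" "R0 < 1" using R0 by auto
    show ?thesis
    proof (rule ex1I[of _ R0])
      show "0 < R0 \<and> R0 < 1 \<and> - m / 2 + R0 / (1 - R0) + lam * (R0 / (1 - R0)) powr q = 0"
        using R0 R0' by (simp add: hh_def)
    next
      fix R assume R: "0 < R \<and> R < 1 \<and> - m / 2 + R / (1 - R) + lam * (R / (1 - R)) powr q = 0"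
      then have hR: "hh R = 0" by (simp add: hh_def)
      show "R = R0"
      proof (rule linorder_cases[of R R0])
        assume "R < R0" then show ?thesis using mono[of R R0] R R0' hR R0 by simp
      next
        assume "R0 < R" then show ?thesis using mono[of R0 R] R R0' hR R0 by simp
      qed simp
    qed
  qed
  have P2: "\<forall>R. 0 < R \<and> R < 1 \<and> - m / 2 + R / (1 - R) + lam * (R / (1 - R)) powr q = 0 \<longrightarrow>
            (\<forall>x::oct. norm x < 1 \<and> norm x \<le> R \<longrightarrow>
               summable (\<lambda>k. norm (omul (opow x k) (a k))) \<and>
               norm (a 0) powr m + (\<Sum>k. norm (omul (opow x (Suc k)) (a (Suc k))))
                 + lam * norm ((\<Sum>k. omul (opow x k) (a k)) - a 0) powr q \<le> 1)"
    using bohr_main[OF m lam q conv bnd] by blast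
  have P3: "\<forall>x::oct. norm x < 1 \<and> norm x \<le> 2 - sqrt 3 \<longrightarrow>
            summable (\<lambda>k. norm (omul (opow x k) (a k))) \<and>
            (\<Sum>k. norm (omul (opow x k) (a k)))
              + (norm ((\<Sum>k. omul (opow x k) (a k)) - a 0))\<^sup>2 \<le> 1"
  proof (intro allI impI)
    fix x :: oct assume x: "norm x < 1 \<and> norm x \<le> 2 - sqrt 3"
    have s1: "1 < sqrt (3::real)" by (simp add: real_less_rsqrt)
    have s2: "sqrt (3::real) < 2" by (simp add: real_sqrt_less_iff real_less_lsqrt)
    have ss: "sqrt (3::real) * sqrt 3 = 3" by simp
    define R3 where "R3 = 2 - sqrt (3::real)"
    have R3: "0 < R3" "R3 < 1" using s1 s2 by (auto simp: R3_def)
    have rho: "R3 / (1 - R3) = (sqrt 3 - 1) / 2"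
      using s1 ss unfolding R3_def by (simp add: field_simps)
    have rp: "0 \<le> (sqrt 3 - 1) / (2::real)" using s1 by simp
    have "- 1 / 2 + R3 / (1 - R3) + 1 * (R3 / (1 - R3)) powr 2 = 0"
      unfolding rho using rp ss by (simp add: power2_eq_square field_simps)
    from bohr_main[of 1 1 2, OF _ _ _ _ conv bnd R3 this] x
    have B: "summable (\<lambda>k. norm (omul (opow x k) (a k))) \<and>
         norm (a 0) powr 1 + (\<Sum>k. norm (omul (opow x (Suc k)) (a (Suc k))))
           + 1 * norm ((\<Sum>k. omul (opow x k) (a k)) - a 0) powr 2 \<le> 1"
      unfolding R3_def by simp
    then have sm: "summable (\<lambda>k. norm (omul (opow x k) (a k)))" by simp
    have o0: "omul (opow x 0) (a 0) = a 0" by (simp add: omul_oone_left)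
    have "(\<Sum>k. norm (omul (opow x (Suc k)) (a (Suc k)))) = (\<Sum>k. norm (omul (opow x k) (a k))) - norm (omul (opow x 0) (a 0))"
      by (rule suminf_split_head[OF sm])
    then have "(\<Sum>k. norm (omul (opow x k) (a k))) = norm (a 0) + (\<Sum>k. norm (omul (opow x (Suc k)) (a (Suc k))))"
      using o0 by (simp del: opow.simps)
    then show "summable (\<lambda>k. norm (omul (opow x k) (a k))) \<and>
            (\<Sum>k. norm (omul (opow x k) (a k)))
              + (norm ((\<Sum>k. omul (opow x k) (a k)) - a 0))\<^sup>2 \<le> 1"
      using B by simp
  qed
  show ?thesis using P1 P2 P3 by blast
qed


end
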